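(* Let $\epsilon>0$ and let $a_1,\dots,a_N\in(0,1)$ satisfy $\sum_{i=1}^Na_i=1$ and $a_{N-1}+a_N\ge\epsilon$. Then \[\sum_{j=1}^N\frac{a_j}{\sum_{i\ge j}a_i}\le\lceil\log_2(1/\epsilon)\rceil+2.\] *)

theory Defs
  imports "HOL-Analysis.Analysis"
begin

end

theory Submission
  imports Defs
begin

theorem lemma6p11:
  fixes a :: "nat \<Rightarrow> real" and N :: nat and \<epsilon> :: real
  assumes "\<epsilon> > 0"
    and "N \<ge> 2"
    and "\<And>i. i \<in> {1..N} \<Longrightarrow> 0 < a i \<and> a i < 1"
    and "(\<Sum>i=1..N. a i) = 1"
    and "a (N - 1) + a N \<ge> \<epsilon>"
  shows "(\<Sum>j=1..N. a j / (\<Sum>i=j..N. a i)) \<le> real_of_int \<lceil>log 2 (1 / \<epsilon>)\<rceil> + 2"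
proof -
  define S where "S j = (\<Sum>i=j..N. a i)" for j
  obtain M where NM: "N = Suc M" and M1: "M \<ge> 1" using assms(2) by (cases N) auto
  have apos: "\<And>i. 1 \<le> i \<Longrightarrow> i \<le> N \<Longrightarrow> 0 < a i" using assms(3) by auto
  have Spos: "\<And>j. 1 \<le> j \<Longrightarrow> j \<le> N \<Longrightarrow> S j > 0"
    unfolding S_def by (rule sum_pos) (auto intro: apos)
  have step: "\<And>j. j < N \<Longrightarrow> S j = a j + S (Suc j)"
    unfolding S_def by (simp add: sum.atLeast_Suc_atMost)
  have aleS: "\<And>j. 1 \<le> j \<Longrightarrow> j \<le> N \<Longrightarrow> a j / S j \<le> 1"
  proof -
    fix j assume j: "1 \<le> j" "j \<le> N"
    have "a j \<le> S j" unfolding S_def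
      using j apos by (intro member_le_sum) (auto intro: less_imp_le)
    thus "a j / S j \<le> 1" using Spos[OF j] by simp
  qed
  have key: "\<And>j. 1 \<le> j \<Longrightarrow> j < N \<Longrightarrow> a j / S j \<le> ln (S j) - ln (S (Suc j))"
  proof -
    fix j assume j: "1 \<le> j" "j < N"
    have p1: "S j > 0" using Spos j by auto
    have p2: "S (Suc j) > 0" using Spos j by auto
    have "ln (S (Suc j) / S j) \<le> S (Suc j) / S j - 1"
      by (rule ln_le_minus_one) (use p1 p2 in auto)
    also have "S (Suc j) / S j - 1 = - (a j / S j)" using step[OF j(2)] p1
      by (simp add: field_simps)
    finally show "a j / S j \<le> ln (S j) - ln (S (Suc j))"
      using p1 p2 by (simp add: ln_div)
  qed
  have S1: "S 1 = 1" using assms(4) S_def by simp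
  have ind: "1 \<le> k \<Longrightarrow> k \<le> M \<Longrightarrow> (\<Sum>j=1..<k. a j / S j) \<le> - ln (S k)" for k
  proof (induction k)
    case 0 then show ?case by simp
  next
    case (Suc k)
    show ?case
    proof (cases "k = 0")
      case True then show ?thesis using S1 by simp
    next
      case False
      then have IH: "(\<Sum>j=1..<k. a j / S j) \<le> - ln (S k)" using Suc by auto
      have "(\<Sum>j=1..<Suc k. a j / S j) = (\<Sum>j=1..<k. a j / S j) + a k / S k"
        using False by (simp add: sum.atLeastLessThan_Suc)
      also have "\<dots> \<le> - ln (S k) + (ln (S k) - ln (S (Suc k)))"
        using IH key[of k] False Suc NM by (intro add_mono) auto
      finally show ?thesis by simp
    qed
  qed
  have SM: "S M = a (N - 1) + a N" unfolding S_def using NM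
    by (simp add: sum.atLeast_Suc_atMost)
  have epsM: "\<epsilon> \<le> S M" using SM assms(5) by simp
  have SMle: "S M \<le> 1"
  proof -
    have "S M \<le> S 1" unfolding S_def
      by (rule sum_mono2) (use M1 apos in \<open>auto intro: less_imp_le\<close>)
    thus ?thesis using S1 by simp
  qed
  have lnb: "- ln (S M) \<le> ln (1 / \<epsilon>)"
    using epsM assms(1) by (simp add: ln_div)
  have lnnn: "ln (1 / \<epsilon>) \<ge> 0" using epsM SMle assms(1) by simp
  have "ln (1 / \<epsilon>) \<le> log 2 (1 / \<epsilon>)"
  proof -
    have "ln (1/\<epsilon>) * ln 2 \<le> ln (1/\<epsilon>)"
      using lnnn ln_2_less_1 by (simp add: mult_left_le)
    thus ?thesis unfolding log_def using ln_gt_zero[of 2] by (simp add: field_simps)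
  qed
  also have "\<dots> \<le> real_of_int \<lceil>log 2 (1 / \<epsilon>)\<rceil>" by linarith
  finally have lnc: "- ln (S M) \<le> real_of_int \<lceil>log 2 (1 / \<epsilon>)\<rceil>" using lnb by linarith
  have "{1..N} = {1..<Suc (Suc M)}" using NM by auto
  hence "(\<Sum>j=1..N. a j / S j) = (\<Sum>j=1..<M. a j / S j) + a M / S M + a N / S N"
    using M1 NM by (simp add: sum.atLeastLessThan_Suc)
  also have "\<dots> \<le> - ln (S M) + 1 + 1"
    using ind[OF M1 order.refl] aleS[of M] aleS[of N] M1 NM
    by (intro add_mono) auto
  finally show ?thesis using lnc unfolding S_def by linarith
qed

end
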